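(* Consider problem (P) and suppose Assumptions A and B hold. Let $\{x^t\}$ be generated by SCP$_{ls}$ and let $\Omega_x$ be the set of accumulation points of $\{x^t\}$. Then (i) $\Omega_x\neq\emptyset$ and $F\equiv\bar F^*$ on $\Omega_x$; (ii) $\{F(x^t)\}$ is nonincreasing and converges to $\bar F^*$, where $\bar F^*:=\lim_{t\to\infty}\bar F(x^{t+1},x^t,L_g^t)$ (this limit exists and is finite).
   Context: Problem (P): $\min_{x\in\mathbb R^n}F(x):=f(x)+P_1(x)-P_2(x)+\delta_{\{g\le 0\}}(x)$, where $f:\mathbb R^n\to\mathbb R$ is continuously differentiable, $P_1,P_2:\mathbb R^n\to\mathbb R$ are convex and continuous, $g=(g_1,\dots,g_m):\mathbb R^n\to\mathbb R^m$ is continuous with $\{x:g(x)\le0\}\neq\emptyset$ (componentwise inequalities), $\delta_C$ the indicator function of $C$. Assumption A: (i) $\nabla f$ is Lipschitz with modulus $L_f$; (ii) each $g_i$ is differentiable with $\nabla g_i$ Lipschitz with modulus $L_{g_i}$; (iii) $F$ is level-bounded. Assumption B (MFCQ): each $g_i$ is continuously differentiable and for every $x$ with $g(x)\le0$ there is $d$ with $\langle\nabla g_i(x),d\rangle<0$ for all $i\in I(x):=\{j:g_j(x)=0\}$. $\bar G(x,y,w)\in\mathbb R^m$ has components $\bar G_i(x,y,w)=g_i(y)+\langle\nabla g_i(y),x-y\rangle+\frac{w_i}{2}\|x-y\|^2$, and $\bar F(x,y,w):=f(x)+P_1(x)-P_2(x)+\delta_{\{\bar G\le0\}}(x,y,w)$.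 Algorithm SCP$_{ls}$: fix $c>0$, $0<\underline L<\bar L$, $\tau>1$ and $x^0$ with $g(x^0)\le0$. For $t=0,1,2,\dots$: (1) pick any $\xi^t\in\partial P_2(x^t)$; (2) choose $L_f^{t,0}\in[\underline L,\bar L]$, $L_g^{t,0}\in[\underline L,\bar L]^m$ arbitrarily, set $\tilde L_f=L_f^{t,0}$, $\tilde L_g=L_g^{t,0}$; (3) compute $\tilde x$ solving: minimize $\langle\nabla f(x^t)-\xi^t,x-x^t\rangle+\frac{\tilde L_f}{2}\|x-x^t\|^2+P_1(x)$ subject to $\bar G(x,x^t,\tilde L_g)\le0$. If $g(\tilde x)\le0$ and $F(\tilde x)\le F(x^t)-\frac c2\|\tilde x-x^t\|^2$, set $x^{t+1}=\tilde x$, $L_f^t=\tilde L_f$, $L_g^t=\tilde L_g$ and go to iteration $t+1$; otherwise, if $g(\tilde x)\not\le0$ replace $\tilde L_g$ by $\tau\tilde L_g$, while if $g(\tilde x)\le0$ but the decrease inequality fails replace $\tilde L_f$ by $\tau\tilde L_f$, and repeat step (3). *)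

theory Defs
  imports "HOL-Analysis.Analysis"
begin

text \<open>Points live in an abstract Euclidean space 'a (playing the role of R^n);
constraints are indexed by a finite type 'm (playing the role of {1..m}).
Gradients are passed explicitly as functions and tied to the functions by
has_derivative assumptions in the theorem.\<close>

definition subgrad :: "('a::real_inner \<Rightarrow> real) \<Rightarrow> 'a \<Rightarrow> 'a \<Rightarrow> bool" where
  "subgrad P x \<xi> \<longleftrightarrow> (\<forall>y. P y \<ge> P x + \<xi> \<bullet> (y - x))"

definition feasible :: "('m \<Rightarrow> 'a \<Rightarrow> real) \<Rightarrow> 'a \<Rightarrow> bool" where
  "feasible g x \<longleftrightarrow> (\<forall>i. g i x \<le> 0)"

definition Fobj :: "('a \<Rightarrow> real) \<Rightarrow> ('a \<Rightarrow> real) \<Rightarrow> ('a \<Rightarrow> real) \<Rightarrow> ('m \<Rightarrow> 'a \<Rightarrow> real) \<Rightarrow> 'a \<Rightarrow> ereal" where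
  "Fobj f P1 P2 g x = (if feasible g x then ereal (f x + P1 x - P2 x) else \<infinity>)"

definition Gbar :: "('m \<Rightarrow> 'a::real_inner \<Rightarrow> real) \<Rightarrow> ('m \<Rightarrow> 'a \<Rightarrow> 'a) \<Rightarrow> 'a \<Rightarrow> 'a \<Rightarrow> ('m \<Rightarrow> real) \<Rightarrow> 'm \<Rightarrow> real" where
  "Gbar g gradg x y w i = g i y + gradg i y \<bullet> (x - y) + w i / 2 * (norm (x - y))\<^sup>2"

definition Fbar :: "('a \<Rightarrow> real) \<Rightarrow> ('a \<Rightarrow> real) \<Rightarrow> ('a \<Rightarrow> real) \<Rightarrow> ('m \<Rightarrow> 'a::real_inner \<Rightarrow> real)
    \<Rightarrow> ('m \<Rightarrow> 'a \<Rightarrow> 'a) \<Rightarrow> 'a \<Rightarrow> 'a \<Rightarrow> ('m \<Rightarrow> real) \<Rightarrow> ereal" where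
  "Fbar f P1 P2 g gradg x y w =
     (if (\<forall>i. Gbar g gradg x y w i \<le> 0) then ereal (f x + P1 x - P2 x) else \<infinity>)"

definition subobj :: "('a::real_inner \<Rightarrow> 'a) \<Rightarrow> ('a \<Rightarrow> real) \<Rightarrow> 'a \<Rightarrow> 'a \<Rightarrow> real \<Rightarrow> 'a \<Rightarrow> real" where
  "subobj gradf P1 xt \<xi> Lf x = (gradf xt - \<xi>) \<bullet> (x - xt) + Lf / 2 * (norm (x - xt))\<^sup>2 + P1 x"

definition subsol :: "('a::real_inner \<Rightarrow> 'a) \<Rightarrow> ('a \<Rightarrow> real) \<Rightarrow> ('m \<Rightarrow> 'a \<Rightarrow> real) \<Rightarrow> ('m \<Rightarrow> 'a \<Rightarrow> 'a)
    \<Rightarrow> 'a \<Rightarrow> 'a \<Rightarrow> real \<Rightarrow> ('m \<Rightarrow> real) \<Rightarrow> 'a \<Rightarrow> bool" where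
  "subsol gradf P1 g gradg xt \<xi> Lf Lg z \<longleftrightarrow>
     (\<forall>i. Gbar g gradg z xt Lg i \<le> 0) \<and>
     (\<forall>x. (\<forall>i. Gbar g gradg x xt Lg i \<le> 0) \<longrightarrow> subobj gradf P1 xt \<xi> Lf z \<le> subobj gradf P1 xt \<xi> Lf x)"

definition accepted :: "('a \<Rightarrow> real) \<Rightarrow> ('a \<Rightarrow> real) \<Rightarrow> ('a \<Rightarrow> real) \<Rightarrow> ('m \<Rightarrow> 'a::real_normed_vector \<Rightarrow> real)
    \<Rightarrow> real \<Rightarrow> 'a \<Rightarrow> 'a \<Rightarrow> bool" where
  "accepted f P1 P2 g c xt z \<longleftrightarrow>
     feasible g z \<and> Fobj f P1 P2 g z \<le> Fobj f P1 P2 g xt - ereal (c / 2 * (norm (z - xt))\<^sup>2)"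

text \<open>One outer iteration (steps (2)-(3), including the inner line search) of SCP_ls:
from x^t and \<xi>^t it produces x^{t+1} with accepted parameters L_f^t, L_g^t.
lf k, lg k, z k are the k-th trial parameters and trial point; N is the accepted trial.\<close>
definition scp_step ::
  "('a \<Rightarrow> real) \<Rightarrow> ('a::real_inner \<Rightarrow> 'a) \<Rightarrow> ('a \<Rightarrow> real) \<Rightarrow> ('a \<Rightarrow> real) \<Rightarrow> ('m \<Rightarrow> 'a \<Rightarrow> real)
   \<Rightarrow> ('m \<Rightarrow> 'a \<Rightarrow> 'a) \<Rightarrow> real \<Rightarrow> real \<Rightarrow> real \<Rightarrow> real
   \<Rightarrow> 'a \<Rightarrow> 'a \<Rightarrow> 'a \<Rightarrow> real \<Rightarrow> ('m \<Rightarrow> real) \<Rightarrow> bool" where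
  "scp_step f gradf P1 P2 g gradg c Lmin Lmax \<tau> xt \<xi> xnext Lf Lg \<longleftrightarrow>
     (\<exists>N::nat. \<exists>lf lg z.
        lf 0 \<in> {Lmin..Lmax} \<and> (\<forall>i. lg 0 i \<in> {Lmin..Lmax}) \<and>
        (\<forall>k\<le>N. subsol gradf P1 g gradg xt \<xi> (lf k) (lg k) (z k)) \<and>
        (\<forall>k<N. \<not> accepted f P1 P2 g c xt (z k) \<and>
           (if feasible g (z k)
            then lf (Suc k) = \<tau> * lf k \<and> lg (Suc k) = lg k
            else lf (Suc k) = lf k \<and> lg (Suc k) = (\<lambda>i. \<tau> * lg k i))) \<and>
        accepted f P1 P2 g c xt (z N) \<and>
        xnext = z N \<and> Lf = lf N \<and> Lg = lg N)"

definition SCPls ::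
  "('a \<Rightarrow> real) \<Rightarrow> ('a::real_inner \<Rightarrow> 'a) \<Rightarrow> ('a \<Rightarrow> real) \<Rightarrow> ('a \<Rightarrow> real) \<Rightarrow> ('m \<Rightarrow> 'a \<Rightarrow> real)
   \<Rightarrow> ('m \<Rightarrow> 'a \<Rightarrow> 'a) \<Rightarrow> real \<Rightarrow> real \<Rightarrow> real \<Rightarrow> real
   \<Rightarrow> (nat \<Rightarrow> 'a) \<Rightarrow> (nat \<Rightarrow> 'a) \<Rightarrow> (nat \<Rightarrow> real) \<Rightarrow> (nat \<Rightarrow> 'm \<Rightarrow> real) \<Rightarrow> bool" where
  "SCPls f gradf P1 P2 g gradg c Lmin Lmax \<tau> x \<xi> LF LG \<longleftrightarrow>
     feasible g (x 0) \<and>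
     (\<forall>t. subgrad P2 (x t) (\<xi> t) \<and>
          scp_step f gradf P1 P2 g gradg c Lmin Lmax \<tau> (x t) (\<xi> t) (x (Suc t)) (LF t) (LG t))"

definition accpts :: "(nat \<Rightarrow> 'a::topological_space) \<Rightarrow> 'a set" where
  "accpts x = {z. \<exists>r. strict_mono r \<and> (x \<circ> r) \<longlonglongrightarrow> z}"

end

theory Submission
  imports Defs
begin

theorem mainTheorem8:
  fixes f P1 P2 :: "'a::euclidean_space \<Rightarrow> real"
    and gradf :: "'a \<Rightarrow> 'a"
    and g :: "'m::finite \<Rightarrow> 'a \<Rightarrow> real"
    and gradg :: "'m \<Rightarrow> 'a \<Rightarrow> 'a"
    and c Lmin Lmax \<tau> :: real
    and x \<xi> :: "nat \<Rightarrow> 'a" and LF :: "nat \<Rightarrow> real" and LG :: "nat \<Rightarrow> 'm \<Rightarrow> real"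
  assumes f_grad: "\<And>y. (f has_derivative (\<lambda>h. gradf y \<bullet> h)) (at y)"
    and f_cont_diff: "continuous_on UNIV gradf"
    and P1_convex: "convex_on UNIV P1" and P1_cont: "continuous_on UNIV P1"
    and P2_convex: "convex_on UNIV P2" and P2_cont: "continuous_on UNIV P2"
    and g_cont: "\<And>i. continuous_on UNIV (g i)"
    and feas_nonempty: "\<exists>y. feasible g y"
    \<comment> \<open>Assumption A\<close>
    and A1: "\<exists>Lf. Lf-lipschitz_on UNIV gradf"
    and A2: "\<And>i y. (g i has_derivative (\<lambda>h. gradg i y \<bullet> h)) (at y)"
    and A2': "\<And>i. \<exists>Lgi. Lgi-lipschitz_on UNIV (gradg i)"
    and A3: "\<And>\<alpha>::real. bounded {y. Fobj f P1 P2 g y \<le> ereal \<alpha>}"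
    \<comment> \<open>Assumption B (MFCQ)\<close>
    and B1: "\<And>i. continuous_on UNIV (gradg i)"
    and B2: "\<And>y. feasible g y \<Longrightarrow> \<exists>d. \<forall>i. g i y = 0 \<longrightarrow> gradg i y \<bullet> d < 0"
    \<comment> \<open>algorithm parameters and generated sequence\<close>
    and c_pos: "c > 0" and L_pos: "0 < Lmin" and L_lt: "Lmin < Lmax" and tau: "\<tau> > 1"
    and run: "SCPls f gradf P1 P2 g gradg c Lmin Lmax \<tau> x \<xi> LF LG"
  shows "\<exists>Fstar::real.
           (\<lambda>t. Fbar f P1 P2 g gradg (x (Suc t)) (x t) (LG t)) \<longlonglongrightarrow> ereal Fstar \<and>
           accpts x \<noteq> {} \<and> (\<forall>z\<in>accpts x. Fobj f P1 P2 g z = ereal Fstar) \<and>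
           decseq (\<lambda>t. Fobj f P1 P2 g (x t)) \<and>
           (\<lambda>t. Fobj f P1 P2 g (x t)) \<longlonglongrightarrow> ereal Fstar"
proof -
  define h where "h = (\<lambda>y. f y + P1 y - P2 y)"
  have step: "feasible g (x (Suc t)) \<and>
      Fobj f P1 P2 g (x (Suc t)) \<le> Fobj f P1 P2 g (x t) - ereal (c / 2 * (norm (x (Suc t) - x t))\<^sup>2) \<and>
      (\<forall>i. Gbar g gradg (x (Suc t)) (x t) (LG t) i \<le> 0)" for t
  proof -
    from run have "scp_step f gradf P1 P2 g gradg c Lmin Lmax \<tau> (x t) (\<xi> t) (x (Suc t)) (LF t) (LG t)"
      unfolding SCPls_def by blast
    then obtain N :: nat and lf :: "nat \<Rightarrow> real" and lg :: "nat \<Rightarrow> 'm \<Rightarrow> real" and z :: "nat \<Rightarrow> 'a" where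
      h1: "\<forall>k\<le>N. subsol gradf P1 g gradg (x t) (\<xi> t) (lf k) (lg k) (z k)"
      and h2: "accepted f P1 P2 g c (x t) (z N)" and h3: "x (Suc t) = z N" "LG t = lg N"
      unfolding scp_step_def by blast
    from h1 have "subsol gradf P1 g gradg (x t) (\<xi> t) (lf N) (lg N) (z N)" by blast
    then show ?thesis using h2 h3 unfolding subsol_def accepted_def by auto
  qed
  have feas: "feasible g (x t)" for t
  proof (cases t)
    case 0 thus ?thesis using run unfolding SCPls_def by blast
  next
    case (Suc n) thus ?thesis using step[of n] by blast
  qed
  have Fx: "Fobj f P1 P2 g (x t) = ereal (h (x t))" for t
    using feas by (simp add: Fobj_def h_def)
  have dec: "h (x (Suc t)) \<le> h (x t)" for t
  proof -
    have "ereal (h (x (Suc t))) \<le> ereal (h (x t)) - ereal (c / 2 * (norm (x (Suc t) - x t))\<^sup>2)"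
      using step[of t] unfolding Fx by blast
    hence "h (x (Suc t)) \<le> h (x t) - c / 2 * (norm (x (Suc t) - x t))\<^sup>2" by simp
    moreover have "c / 2 * (norm (x (Suc t) - x t))\<^sup>2 \<ge> 0" using c_pos by simp
    ultimately show ?thesis by linarith
  qed
  have decs: "decseq (\<lambda>t. h (x t))"
    using dec by (intro decseq_SucI) auto
  have Fbx: "Fbar f P1 P2 g gradg (x (Suc t)) (x t) (LG t) = ereal (h (x (Suc t)))" for t
    using step[of t] by (simp add: Fbar_def h_def)
  have contf: "continuous_on UNIV f"
    using f_grad has_derivative_continuous continuous_at_imp_continuous_on by blast
  have conth: "continuous_on UNIV h"
    unfolding h_def using contf P1_cont P2_cont by (intro continuous_intros) auto
  define S where "S = {y. Fobj f P1 P2 g y \<le> ereal (h (x 0))}"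
  have xS: "x t \<in> S" for t
  proof -
    have "h (x t) \<le> h (x 0)" using decs by (simp add: decseq_def)
    thus ?thesis using Fx S_def by simp
  qed
  have bS: "bounded S" using A3 S_def by simp
  have "compact (h ` closure S)"
    using bS continuous_on_subset[OF conth subset_UNIV] compact_closure
    by (intro compact_continuous_image) blast+
  then have "bounded (h ` closure S)" by (rule compact_imp_bounded)
  then obtain a where a: "\<forall>v\<in>h ` closure S. \<bar>v\<bar> \<le> a"
    unfolding bounded_real by blast
  have lb: "\<forall>t. - a \<le> h (x t)"
  proof
    fix t
    have "x t \<in> closure S" using xS closure_subset by blast
    hence "\<bar>h (x t)\<bar> \<le> a" using a by blast
    thus "- a \<le> h (x t)" by linarith
  qed
  obtain Fstar where lim: "(\<lambda>t. h (x t)) \<longlonglongrightarrow> Fstar"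
    using decseq_convergent[OF decs lb] by blast
  have bx: "bounded (range x)" using bS xS by (meson bounded_subset image_subsetI)
  have ne: "accpts x \<noteq> {}"
    using bounded_imp_convergent_subsequence[OF bx] unfolding accpts_def by blast
  have acc: "Fobj f P1 P2 g z = ereal Fstar" if zin: "z \<in> accpts x" for z
  proof -
    obtain r where r: "strict_mono r" "(x \<circ> r) \<longlonglongrightarrow> z" using zin unfolding accpts_def by blast
    have "feasible g z" unfolding feasible_def
    proof
      fix i
      have "(\<lambda>n. g i ((x \<circ> r) n)) \<longlonglongrightarrow> g i z"
        using continuous_on_tendsto_compose[OF g_cont[of i] r(2)] by simp
      moreover have "\<forall>n. g i ((x \<circ> r) n) \<le> 0" using feas unfolding feasible_def by simp
      ultimately show "g i z \<le> 0" by (meson LIMSEQ_le_const2)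
    qed
    moreover have "(\<lambda>n. h ((x \<circ> r) n)) \<longlonglongrightarrow> h z"
      using continuous_on_tendsto_compose[OF conth r(2)] by simp
    moreover have "(\<lambda>n. h ((x \<circ> r) n)) \<longlonglongrightarrow> Fstar"
      using LIMSEQ_subseq_LIMSEQ[OF lim r(1)] by (simp add: comp_def)
    ultimately have "h z = Fstar" "feasible g z" using LIMSEQ_unique by blast+
    thus ?thesis by (simp add: Fobj_def h_def)
  qed
  have l1: "(\<lambda>t. Fbar f P1 P2 g gradg (x (Suc t)) (x t) (LG t)) \<longlonglongrightarrow> ereal Fstar"
    unfolding Fbx using LIMSEQ_Suc[OF lim] by (intro tendsto_intros) (simp add: comp_def)
  have l2: "(\<lambda>t. Fobj f P1 P2 g (x t)) \<longlonglongrightarrow> ereal Fstar"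
    unfolding Fx using lim by (intro tendsto_intros)
  have d2: "decseq (\<lambda>t. Fobj f P1 P2 g (x t))"
    unfolding Fx using decs by (simp add: decseq_def)
  show ?thesis using l1 l2 d2 ne acc by blast
qed

end
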